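(* Consider an undiscounted ($\gamma=1$) MDP with finite state set $\mathcal{S}$, deterministic transitions $\delta:\{(s,a): s\in\mathcal{S}\setminus\mathcal{T}, a\in\mathbb{A}(s)\}\to\mathcal{S}$, a nonempty set $\mathcal{T}\subseteq\mathcal{S}$ of absorbing terminal states, and rewards $R(s,a)$. Assume every non-terminal state $s$ has a finite action set with $|\mathbb{A}(s)|\ge 2$, that from every state some terminal state is reachable, and that $\max_{s,a} R(s,a) < -\tau$ for a given $\tau>0$. For non-terminal $s$ let $\tau_s = \tau/\log|\mathbb{A}(s)|$ (the decoupled entropy temperature). Then the decoupled entropy-regularized Bellman equation $$V(s) = \tau_s \log \sum_{a\in\mathbb{A}(s)} \exp\!\Big(\frac{R(s,a) + V(\delta(s,a))}{\tau_s}\Big)\quad (s\notin\mathcal{T}),\qquad V(s)=0\quad (s\in\mathcal{T}),$$ has a real-valued (finite) solution $V:\mathcal{S}\to\mathbb{R}$.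
   Context: This is the maximum-entropy (soft) Bellman equation in which the entropy regularizer at each state is divided by its range $\log|\mathbb{A}(s)|$, i.e. the temperature at state $s$ is $\tau/\log|\mathbb{A}(s)|$; $\mathbb{A}(s)$ denotes the set of actions available at state $s$. *)

theory Defs
  imports Complex_Main
begin

definition mdp_edges :: "'s set \<Rightarrow> 's set \<Rightarrow> ('s \<Rightarrow> 'a set) \<Rightarrow> ('s \<Rightarrow> 'a \<Rightarrow> 's) \<Rightarrow> ('s \<times> 's) set" where
  "mdp_edges S T A \<delta> = {(s, \<delta> s a) | s a. s \<in> S - T \<and> a \<in> A s}"

definition decoupled_temp :: "real \<Rightarrow> ('s \<Rightarrow> 'a set) \<Rightarrow> 's \<Rightarrow> real" where
  "decoupled_temp \<tau> A s = \<tau> / ln (real (card (A s)))"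

end

theory Submission
  imports Defs
begin

theorem proposition1:
  fixes S T :: "'s set" and A :: "'s \<Rightarrow> 'a set" and \<delta> :: "'s \<Rightarrow> 'a \<Rightarrow> 's"
    and R :: "'s \<Rightarrow> 'a \<Rightarrow> real" and \<tau> :: real
  assumes finS: "finite S"
    and TS: "T \<subseteq> S" and Tne: "T \<noteq> {}"
    and finA: "\<And>s. s \<in> S - T \<Longrightarrow> finite (A s)"
    and cardA: "\<And>s. s \<in> S - T \<Longrightarrow> card (A s) \<ge> 2"
    and trans: "\<And>s a. s \<in> S - T \<Longrightarrow> a \<in> A s \<Longrightarrow> \<delta> s a \<in> S"
    and reach: "\<And>s. s \<in> S \<Longrightarrow> \<exists>t\<in>T. (s, t) \<in> (mdp_edges S T A \<delta>)\<^sup>*"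
    and tau_pos: "\<tau> > 0"
    and rew: "\<And>s a. s \<in> S - T \<Longrightarrow> a \<in> A s \<Longrightarrow> R s a < - \<tau>"
  shows "\<exists>V :: 's \<Rightarrow> real.
           (\<forall>s\<in>S - T. V s = decoupled_temp \<tau> A s *
               ln (\<Sum>a\<in>A s. exp ((R s a + V (\<delta> s a)) / decoupled_temp \<tau> A s)))
         \<and> (\<forall>s\<in>T. V s = 0)"
proof -
  define ts where "ts = decoupled_temp \<tau> A"
  define E where "E = mdp_edges S T A \<delta>"
  define B where "B = (\<lambda>(V::'s \<Rightarrow> real) s. if s \<in> S - T then
      ts s * ln (\<Sum>a\<in>A s. exp ((R s a + V (\<delta> s a)) / ts s)) else 0)"
  have ne: "A s \<noteq> {}" if "s \<in> S - T" for s
    using cardA[OF that] by auto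
  have lnc: "ln (real (card (A s))) > 0" if "s \<in> S - T" for s
    using cardA[OF that] by simp
  have tsp: "ts s > 0" if "s \<in> S - T" for s
    using lnc[OF that] tau_pos unfolding ts_def decoupled_temp_def by simp
  have sump: "(\<Sum>a\<in>A s. exp ((R s a + V (\<delta> s a)) / ts s)) > 0" if "s \<in> S - T" for s V
    by (rule sum_pos[OF finA[OF that] ne[OF that]]) simp
  have mono: "B V s \<le> B W s" if "\<And>x. V x \<le> W x" for V W s
  proof (cases "s \<in> S - T")
    case True
    have "(\<Sum>a\<in>A s. exp ((R s a + V (\<delta> s a)) / ts s)) \<le> (\<Sum>a\<in>A s. exp ((R s a + W (\<delta> s a)) / ts s))"
      by (rule sum_mono) (use that tsp[OF True] in \<open>simp add: divide_right_mono\<close>)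
    then have "ln (\<Sum>a\<in>A s. exp ((R s a + V (\<delta> s a)) / ts s)) \<le> ln (\<Sum>a\<in>A s. exp ((R s a + W (\<delta> s a)) / ts s))"
      using sump[OF True] by simp
    then show ?thesis using True tsp[OF True] unfolding B_def by (simp add: mult_left_mono)
  qed (auto simp: B_def)
  have upper: "B V s \<le> 0" if "\<And>x. V x \<le> 0" for V s
  proof (cases "s \<in> S - T")
    case True
    let ?c = "real (card (A s))"
    have cp: "?c > 0" using cardA[OF True] by simp
    have "\<tau> / ts s = ln ?c" using lnc[OF True] tau_pos unfolding ts_def decoupled_temp_def by simp
    have "(\<Sum>a\<in>A s. exp ((R s a + V (\<delta> s a)) / ts s)) < (\<Sum>a\<in>A s. 1 / ?c)"
    proof (rule sum_strict_mono[OF finA[OF True] ne[OF True]])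
      fix a assume a: "a \<in> A s"
      have "(R s a + V (\<delta> s a)) / ts s < - \<tau> / ts s"
        using rew[OF True a] that[of "\<delta> s a"] tsp[OF True] by (simp add: divide_strict_right_mono pos_divide_less_eq)
      also have "\<dots> = - ln ?c" using \<open>\<tau> / ts s = ln ?c\<close> by simp
      finally have "exp ((R s a + V (\<delta> s a)) / ts s) < exp (- ln ?c)" by simp
      also have "\<dots> = 1 / ?c" using cp by (simp add: exp_minus inverse_eq_divide)
      finally show "exp ((R s a + V (\<delta> s a)) / ts s) < 1 / ?c" .
    qed
    also have "\<dots> = 1" using cp by simp
    finally have "ln (\<Sum>a\<in>A s. exp ((R s a + V (\<delta> s a)) / ts s)) < 0"
      using sump[OF True] by simp
    then show ?thesis using True tsp[OF True] unfolding B_def by (simp add: mult_nonneg_nonpos)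
  qed (auto simp: B_def)
  have lower1: "B V s \<ge> R s a + V (\<delta> s a)" if "s \<in> S - T" "a \<in> A s" for V s a
  proof -
    have "exp ((R s a + V (\<delta> s a)) / ts s) \<le> (\<Sum>a\<in>A s. exp ((R s a + V (\<delta> s a)) / ts s))"
      by (rule member_le_sum[OF that(2)]) (auto intro: finA[OF that(1)])
    then have "(R s a + V (\<delta> s a)) / ts s \<le> ln (\<Sum>a\<in>A s. exp ((R s a + V (\<delta> s a)) / ts s))"
      using sump[OF that(1)] by (metis exp_gt_zero ln_exp ln_le_cancel_iff)
    then show ?thesis using that tsp[OF that(1)] unfolding B_def by (simp add: pos_divide_le_eq mult.commute)
  qed
  define M where "M = (\<Sum>s\<in>S - T. \<Sum>a\<in>A s. \<bar>R s a\<bar>)"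
  have M: "- M \<le> R s a" if "s \<in> S - T" "a \<in> A s" for s a
  proof -
    have "\<bar>R s a\<bar> \<le> (\<Sum>a\<in>A s. \<bar>R s a\<bar>)"
      by (rule member_le_sum[OF that(2)]) (auto intro: finA[OF that(1)])
    also have "\<dots> \<le> M" unfolding M_def
      by (rule member_le_sum[OF that(1)]) (auto simp: finS intro!: sum_nonneg)
    finally show ?thesis by linarith
  qed
  have M0: "M \<ge> 0" unfolding M_def by (auto intro!: sum_nonneg)
  define d where "d = (\<lambda>s. LEAST n. \<exists>t\<in>T. (s,t) \<in> E ^^ n)"
  define L where "L = (\<lambda>s. if s \<in> S then - M * real (d s) else 0)"
  have dex: "\<exists>n. \<exists>t\<in>T. (s,t) \<in> E ^^ n" if "s \<in> S" for s
    using reach[OF that] unfolding E_def[symmetric] by (auto simp: rtrancl_power)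
  have step: "\<exists>a\<in>A s. d (\<delta> s a) + 1 \<le> d s" if sST: "s \<in> S - T" for s
  proof -
    obtain t where t: "t \<in> T" "(s,t) \<in> E ^^ d s"
    proof -
      have "s \<in> S" using sST by blast
      from LeastI_ex[OF dex[OF this]] show ?thesis using that unfolding d_def by blast
    qed
    have "d s \<noteq> 0"
    proof
      assume "d s = 0" then show False using t sST by auto
    qed
    then obtain m where m: "d s = Suc m" by (cases "d s") auto
    then obtain u where u: "(s,u) \<in> E" "(u,t) \<in> E ^^ m" using t relpow_Suc_D2 by metis
    from u(1) obtain a where a: "a \<in> A s" "u = \<delta> s a" unfolding E_def mdp_edges_def by auto
    have "d u \<le> m" unfolding d_def by (rule Least_le) (use u t in auto)
    then show ?thesis using a m by auto
  qed
  have Lle0: "L s \<le> 0" for s unfolding L_def using M0 by auto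
  have BL: "L s \<le> B V s" if "\<And>x. L x \<le> V x" for V s
  proof (cases "s \<in> S - T")
    case True
    then obtain a where a: "a \<in> A s" "d (\<delta> s a) + 1 \<le> d s" using step by blast
    have u: "\<delta> s a \<in> S" using trans[OF True a(1)] .
    have "L s = - M * real (d s)" using True L_def by simp
    also have "\<dots> \<le> - M + - M * real (d (\<delta> s a))"
    proof -
      have "real (d (\<delta> s a)) + 1 \<le> real (d s)" using a(2) by linarith
      then have "M * (real (d (\<delta> s a)) + 1) \<le> M * real (d s)" using M0 by (rule mult_left_mono)
      then show ?thesis by (simp add: algebra_simps)
    qed
    also have "\<dots> \<le> R s a + V (\<delta> s a)" using M[OF True a(1)] that[of "\<delta> s a"] u L_def by simp
    also have "\<dots> \<le> B V s" by (rule lower1[OF True a(1)])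
    finally show ?thesis .
  next
    case False
    then have "L s = 0"
    proof (cases "s \<in> S")
      case True
      with False have "s \<in> T" by auto
      then have "\<exists>t\<in>T. (s,t) \<in> E ^^ 0" by auto
      then have "d s = 0" unfolding d_def by (rule Least_eq_0)
      then show ?thesis using L_def by simp
    qed (simp add: L_def)
    then show ?thesis using False by (auto simp: B_def)
  qed
  define P where "P = {V. (\<forall>x. L x \<le> V x \<and> V x \<le> 0) \<and> (\<forall>x. V x \<le> B V x)}"
  have LP: "L \<in> P" unfolding P_def using Lle0 BL by auto
  define W where "W = (\<lambda>s. SUP V\<in>P. V s)"
  have bdd: "bdd_above ((\<lambda>V. V s) ` P)" for s
    by (rule bdd_aboveI[of _ 0]) (auto simp: P_def)
  have Wub: "V s \<le> W s" if "V \<in> P" for V s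
    unfolding W_def by (rule cSUP_upper[OF that bdd])
  have W0: "W s \<le> 0" for s
    unfolding W_def using LP by (intro cSUP_least) (auto simp: P_def)
  have LW: "L s \<le> W s" for s using Wub[OF LP] .
  have WB': "(SUP V\<in>P. V s) \<le> B W s" for s
  proof (rule cSUP_least)
    show "P \<noteq> {}" using LP by auto
    fix V assume V: "V \<in> P"
    have "V s \<le> B V s" using V P_def by auto
    also have "\<dots> \<le> B W s" by (rule mono) (use Wub[OF V] in auto)
    finally show "V s \<le> B W s" .
  qed
  have WB: "W s \<le> B W s" for s using WB'[of s] by (simp add: W_def)
  have "B W \<in> P" unfolding P_def
    using BL[OF LW] upper[OF W0] mono[OF WB] by auto
  then have "B W s \<le> W s" for s by (rule Wub)
  then have fx: "W s = B W s" for s using WB[of s] by (rule order_antisym[rotated])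
  show ?thesis
  proof (intro exI conjI ballI)
    fix s assume s: "s \<in> S - T"
    show "W s = decoupled_temp \<tau> A s * ln (\<Sum>a\<in>A s. exp ((R s a + W (\<delta> s a)) / decoupled_temp \<tau> A s))"
      using fx[of s] s unfolding B_def ts_def by simp
  next
    fix s assume "s \<in> T"
    then show "W s = 0" using fx[of s] unfolding B_def by simp
  qed
qed

end
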